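(* For $I,J\in\mathcal I$ with $I\vartriangleleft J$, the unique $\vartriangleleft$-minimal set in $\mathcal M(I)$ and the unique $\vartriangleleft$-minimal set in $\mathcal M(J)$ are identical.
   Context: Let $(a_i)_{i=1,\dots,n}$ be a sequence of distinct integers between $1$ and $n$, and set $a_0=0$; write $A=(a_i)_{i=0,1,\dots,n}$. A set $I\subseteq\{0\}\cup[n]$ is feasible if $a_i<a_j$ for all $i,j\in I$ with $i<j$; $\mathcal I$ denotes the family of feasible sets of maximum cardinality. Patience sorting: start with empty piles $P_0,\dots,P_n$; for $i=0,1,\dots,n$ in order, put $a_i$ on top of the pile $P_j$ with smallest index $j$ such that $P_j$ is empty or the top element of $P_j$ is greater than $a_i$. Let $P_0,\dots,P_k$ be the resulting nonempty piles. Say $a_u$ is placed below $a_v$ on a pile if both lie on the same pile and $a_u$ was put there before $a_v$. For $I,J\in\mathcal I$, write $I\vartriangleleft J$ if $I\setminus J=\{u\}$ and $J\setminus I=\{v\}$ for some $u,v$ such that $a_u$ is placed strictly below $a_v$ on pile $P_i$ for some $1\le i\le k$. For $I\in\mathcal I$, $\mathcal M(I)\subseteq\mathcal I$ is the smallest family containing $I$ such that whenever $J\in\mathcal M(I)$ and $J'\vartriangleleft J$ then $J'\in\mathcal M(I)$. A set $I\in\mathcal I$ is $\vartriangleleft$-minimal if there is no $J\in\mathcal I$ with $J\vartriangleleft I$. (Each $\mathcal M(I)$ contains exactly one $\vartriangleleft$-minimal set.) *)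

theory Defs
  imports Main
begin

text \<open>The sequence is a function a :: nat => nat; only a 0, ..., a n matter,
  and the theorem assumes a 0 = 0 and that a 1..a n are distinct values in 1..n.\<close>

definition feasible :: "(nat \<Rightarrow> nat) \<Rightarrow> nat \<Rightarrow> nat set \<Rightarrow> bool" where
  "feasible a n I \<longleftrightarrow> I \<subseteq> {0..n} \<and> (\<forall>i\<in>I. \<forall>j\<in>I. i < j \<longrightarrow> a i < a j)"

definition maxfeas :: "(nat \<Rightarrow> nat) \<Rightarrow> nat \<Rightarrow> nat set set" where
  "maxfeas a n = {I. feasible a n I \<and> (\<forall>J. feasible a n J \<longrightarrow> card J \<le> card I)}"

text \<open>A pile is a list of indices, listed from bottom to top
  (i.e. in the order they were put on the pile). Putting a_i on the pile with
  the smallest index that is empty or whose top element exceeds a_i; empty piles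
  are represented implicitly by the end of the list.\<close>
fun ps_insert :: "(nat \<Rightarrow> nat) \<Rightarrow> nat \<Rightarrow> nat list list \<Rightarrow> nat list list" where
  "ps_insert a i [] = [[i]]"
| "ps_insert a i (p # ps) =
     (if p = [] \<or> a (last p) > a i then (p @ [i]) # ps else p # ps_insert a i ps)"

definition piles :: "(nat \<Rightarrow> nat) \<Rightarrow> nat \<Rightarrow> nat list list" where
  "piles a n = foldl (\<lambda>ps i. ps_insert a i ps) [] [0..<Suc n]"

definition placed_below :: "(nat \<Rightarrow> nat) \<Rightarrow> nat \<Rightarrow> nat \<Rightarrow> nat \<Rightarrow> nat \<Rightarrow> bool" where
  "placed_below a n i u v \<longleftrightarrow> i < length (piles a n) \<and>
     (\<exists>p q. p < q \<and> q < length (piles a n ! i) \<and> piles a n ! i ! p = u \<and> piles a n ! i ! q = v)"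

definition lhd :: "(nat \<Rightarrow> nat) \<Rightarrow> nat \<Rightarrow> nat set \<Rightarrow> nat set \<Rightarrow> bool" where
  "lhd a n I J \<longleftrightarrow> I \<in> maxfeas a n \<and> J \<in> maxfeas a n \<and>
     (\<exists>u v. I - J = {u} \<and> J - I = {v} \<and>
        (\<exists>i. 1 \<le> i \<and> i < length (piles a n) \<and> placed_below a n i u v))"

inductive_set Mfam :: "(nat \<Rightarrow> nat) \<Rightarrow> nat \<Rightarrow> nat set \<Rightarrow> nat set set"
  for a n I where
  base: "I \<in> Mfam a n I"
| step: "J \<in> Mfam a n I \<Longrightarrow> lhd a n J' J \<Longrightarrow> J' \<in> Mfam a n I"

definition lhd_minimal :: "(nat \<Rightarrow> nat) \<Rightarrow> nat \<Rightarrow> nat set \<Rightarrow> bool" where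
  "lhd_minimal a n I \<longleftrightarrow> I \<in> maxfeas a n \<and> \<not> (\<exists>J \<in> maxfeas a n. lhd a n J I)"

end

theory Submission
  imports Defs
begin

definition pinv :: "(nat \<Rightarrow> nat) \<Rightarrow> nat \<Rightarrow> nat list list \<Rightarrow> bool" where
  "pinv a m ps \<longleftrightarrow> (\<forall>p\<in>set ps. sorted_wrt (<) p \<and> sorted_wrt (\<lambda>x y. a y < a x) p \<and> (\<forall>x\<in>set p. x < m))
     \<and> distinct (concat ps)"

lemma ins_set: "set (concat (ps_insert a i ps)) = insert i (set (concat ps))"
  by (induction ps) auto

lemma ins_distinct: "distinct (concat ps) \<Longrightarrow> i \<notin> set (concat ps) \<Longrightarrow> distinct (concat (ps_insert a i ps))"
proof (induction ps)
  case Nil then show ?case by simp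
next
  case (Cons p ps)
  have e: "(\<Union>x\<in>set (ps_insert a i ps). set x) = insert i (\<Union>x\<in>set ps. set x)"
    using ins_set[of a i ps] by simp
  show ?case using Cons e by auto
qed

lemma ins_piles: "q \<in> set (ps_insert a i ps) \<Longrightarrow>
   q \<in> set ps \<or> q = [i] \<or> (\<exists>p\<in>set ps. q = p @ [i] \<and> (p = [] \<or> a (last p) > a i))"
  by (induction ps) (auto split: if_splits)

lemma sorted_last: "sorted_wrt R p \<Longrightarrow> p \<noteq> [] \<Longrightarrow> x \<in> set p \<Longrightarrow> x = last p \<or> R x (last p)"
  by (induction p) (auto split: if_splits)

lemma pinv_step_piles:
  assumes H: "\<forall>p\<in>set ps. sorted_wrt (<) p \<and> sorted_wrt (\<lambda>x y. a y < a x) p \<and> (\<forall>x\<in>set p. x < i)"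
    and q: "q \<in> set (ps_insert a i ps)"
  shows "sorted_wrt (<) q \<and> sorted_wrt (\<lambda>x y. a y < a x) q \<and> (\<forall>x\<in>set q. x < Suc i)"
proof -
  consider "q \<in> set ps" | "q = [i]" | "\<exists>p\<in>set ps. q = p @ [i] \<and> (p = [] \<or> a i < a (last p))"
    using ins_piles[OF q] by blast
  then show ?thesis
  proof cases
    case 1 then show ?thesis using H by fastforce
  next
    case 2 then show ?thesis by simp
  next
    case 3
    then obtain p where p: "p \<in> set ps" "q = p @ [i]" "p = [] \<or> a i < a (last p)" by blast
    have s1: "sorted_wrt (<) p" "sorted_wrt (\<lambda>x y. a y < a x) p" "\<forall>x\<in>set p. x < i" using H p by auto
    have "\<forall>x\<in>set p. a i < a x"
    proof
      fix x assume x: "x \<in> set p"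
      then have "p \<noteq> []" by auto
      with p(3) have "a i < a (last p)" by simp
      with sorted_last[OF s1(2) \<open>p \<noteq> []\<close> x] show "a i < a x" by auto
    qed
    then show ?thesis using s1 p(2) by (auto simp: sorted_wrt_append)
  qed
qed

lemma pinv_step: "pinv a i ps \<Longrightarrow> pinv a (Suc i) (ps_insert a i ps)"
proof -
  assume H: "pinv a i ps"
  have "i \<notin> set (concat ps)"
  proof
    assume "i \<in> set (concat ps)"
    then obtain p where "p \<in> set ps" "i \<in> set p" by auto
    then show False using H unfolding pinv_def by fastforce
  qed
  then show ?thesis using H pinv_step_piles[of ps a i] ins_distinct[of ps i a] unfolding pinv_def
    by auto
qed

lemma pinv_fold: "pinv a m (foldl (\<lambda>ps i. ps_insert a i ps) [] [0..<m])"
proof (induction m)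
  case 0 then show ?case by (simp add: pinv_def)
next
  case (Suc m) then show ?case by (simp add: pinv_step)
qed

lemma pinv_piles: "pinv a (Suc n) (piles a n)"
  unfolding piles_def by (rule pinv_fold)

lemma placed_below_props: "placed_below a n i u v \<Longrightarrow> u < v \<and> a v < a u"
proof -
  assume "placed_below a n i u v"
  then obtain p q where pq: "i < length (piles a n)" "p < q" "q < length (piles a n ! i)"
     "piles a n ! i ! p = u" "piles a n ! i ! q = v" unfolding placed_below_def by blast
  have "piles a n ! i \<in> set (piles a n)" using pq(1) by simp
  then have "sorted_wrt (<) (piles a n ! i)" "sorted_wrt (\<lambda>x y. a y < a x) (piles a n ! i)"
    using pinv_piles[of a n] unfolding pinv_def by auto
  then show ?thesis using pq by (auto simp: sorted_wrt_iff_nth_less)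
qed

lemma distinct_concat_pos: "distinct (concat xss) \<Longrightarrow> i1 < length xss \<Longrightarrow> i2 < length xss \<Longrightarrow>
  q1 < length (xss ! i1) \<Longrightarrow> q2 < length (xss ! i2) \<Longrightarrow> xss ! i1 ! q1 = xss ! i2 ! q2 \<Longrightarrow> i1 = i2 \<and> q1 = q2"
proof (induction xss arbitrary: i1 i2)
  case Nil then show ?case by simp
next
  case (Cons xs xss)
  have D: "set xs \<inter> set (concat xss) = {}" "distinct xs" "distinct (concat xss)" using Cons.prems(1) by auto
  have M: "xss ! j \<in> set xss" if "j < length xss" for j using that by simp
  have C: "xss ! j ! q \<in> set (concat xss)" if "j < length xss" "q < length (xss ! j)" for j q
    using M[OF that(1)] nth_mem[OF that(2)] by auto
  show ?case
  proof (cases i1)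
    case 0
    then show ?thesis
    proof (cases i2)
      case 0 then show ?thesis using Cons.prems \<open>i1 = 0\<close> by (simp add: nth_eq_iff_index_eq)
    next
      case (Suc j2)
      have "xs ! q1 \<in> set xs" using Cons.prems(4) 0 by (simp del: Cons.prems)
      moreover have "xs ! q1 = xss ! j2 ! q2" using Cons.prems(6) 0 Suc by simp
      moreover have "xss ! j2 ! q2 \<in> set (concat xss)" using C[of j2 q2] Cons.prems(3,5) Suc by simp
      ultimately have False using D(1) by (metis disjoint_iff)
      then show ?thesis ..
    qed
  next
    case (Suc j1)
    then show ?thesis
    proof (cases i2)
      case 0
      have "xs ! q2 \<in> set xs" using Cons.prems(5) 0 by (simp del: Cons.prems)
      moreover have "xs ! q2 = xss ! j1 ! q1" using Cons.prems(6) 0 Suc by simp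
      moreover have "xss ! j1 ! q1 \<in> set (concat xss)" using C[of j1 q1] Cons.prems(2,4) Suc by simp
      ultimately have False using D(1) by (metis disjoint_iff)
      then show ?thesis ..
    next
      case (Suc j2)
      have "j1 = j2 \<and> q1 = q2"
        using Cons.IH[of j1 j2] D(3) Cons.prems(2-6) Suc \<open>i1 = Suc j1\<close> by simp
      then show ?thesis using Suc \<open>i1 = Suc j1\<close> by simp
    qed
  qed
qed


lemma maxfeas_D: "K \<in> maxfeas a n \<Longrightarrow> finite K \<and> K \<subseteq> {0..n} \<and> (\<forall>x\<in>K. \<forall>y\<in>K. x < y \<longrightarrow> a x < a y)"
  unfolding maxfeas_def feasible_def using finite_subset by blast

lemma lhd_D:
  assumes "lhd a n K J"
  obtains u v i where "K = insert u (J - {v})" "v \<in> J" "u \<notin> J" "u < v" "a v < a u"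
    "1 \<le> i" "i < length (piles a n)" "placed_below a n i u v" "K \<in> maxfeas a n" "J \<in> maxfeas a n"
proof -
  obtain u v i where A: "K - J = {u}" "J - K = {v}" "1 \<le> i" "i < length (piles a n)" "placed_below a n i u v"
    and M: "K \<in> maxfeas a n" "J \<in> maxfeas a n" using assms unfolding lhd_def by blast
  have "K = insert u (J - {v})" "v \<in> J" "u \<notin> J" using A(1,2) by blast+
  moreover have "u < v" "a v < a u" using placed_below_props[OF A(5)] by auto
  ultimately show ?thesis using that A M by blast
qed

lemma lhd_sum: "lhd a n K J \<Longrightarrow> sum id K < sum id J"
proof -
  assume h: "lhd a n K J"
  obtain u v i where L: "K = insert u (J - {v})" "v \<in> J" "u \<notin> J" "u < v" "J \<in> maxfeas a n"
    using lhd_D[OF h] by metis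
  have fJ: "finite J" using maxfeas_D[OF L(5)] by blast
  have "sum id J = v + sum id (J - {v})" using fJ L(2) by (simp add: sum.remove)
  moreover have "sum id K = u + sum id (J - {v})" using fJ L(1,3) by simp
  ultimately show ?thesis using L(4) by simp
qed

lemma pair_lemma:
  fixes u1 v1 u2 v2 :: nat and a :: "nat \<Rightarrow> nat"
  assumes FJ: "\<forall>x\<in>J. \<forall>y\<in>J. x < y \<longrightarrow> a x < a y"
    and F1: "\<forall>x\<in>K1. \<forall>y\<in>K1. x < y \<longrightarrow> a x < a y"
    and F2: "\<forall>x\<in>K2. \<forall>y\<in>K2. x < y \<longrightarrow> a x < a y"
    and E1: "K1 = insert u1 (J - {v1})" and E2: "K2 = insert u2 (J - {v2})"
    and h: "v1 \<in> J" "v2 \<in> J" "u1 \<notin> J" "u2 \<notin> J" "u1 < v1" "u2 < v2" "a v1 < a u1" "a v2 < a u2"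
    and lt: "v1 < v2"
  shows "u1 < u2 \<and> a u1 < a u2"
proof -
  have "v1 \<noteq> v2" using lt by simp
  then have v1K2: "v1 \<in> K2" "u2 \<in> K2" using E2 h(1) by auto
  have av: "a v1 < a v2" using FJ h(1,2) lt by blast
  have "v1 \<noteq> u2" using h(1,4) by blast
  have "\<not> u2 < v1"
  proof
    assume "u2 < v1"
    then have "a u2 < a v1" using F2 v1K2 by blast
    then show False using av h(8) by simp
  qed
  then have "v1 < u2" using \<open>v1 \<noteq> u2\<close> by simp
  have K1: "u1 \<in> K1" "v2 \<in> K1" using E1 h(2) \<open>v1 \<noteq> v2\<close> by auto
  have "u1 < v2" using h(5) lt by simp
  then have "a u1 < a v2" using F1 K1 by blast
  then show ?thesis using \<open>v1 < u2\<close> h(5,8) by simp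
qed

lemma lc:
  assumes h1: "lhd a n K1 J" and h2: "lhd a n K2 J"
  shows "\<exists>W. (lhd a n)\<^sup>*\<^sup>* W K1 \<and> (lhd a n)\<^sup>*\<^sup>* W K2"
proof -
  obtain u1 v1 i1 where L1: "K1 = insert u1 (J - {v1})" "v1 \<in> J" "u1 \<notin> J" "u1 < v1" "a v1 < a u1"
    "1 \<le> i1" "i1 < length (piles a n)" "placed_below a n i1 u1 v1" "K1 \<in> maxfeas a n" "J \<in> maxfeas a n"
    using lhd_D[OF h1] by metis
  obtain u2 v2 i2 where L2: "K2 = insert u2 (J - {v2})" "v2 \<in> J" "u2 \<notin> J" "u2 < v2" "a v2 < a u2"
    "1 \<le> i2" "i2 < length (piles a n)" "placed_below a n i2 u2 v2" "K2 \<in> maxfeas a n"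
    using lhd_D[OF h2] by metis
  note D1 = maxfeas_D[OF L1(9)] and D2 = maxfeas_D[OF L2(9)] and DJ = maxfeas_D[OF L1(10)]
  show ?thesis
  proof (cases "v1 = v2")
    case True
    show ?thesis
    proof (cases "u1 = u2")
      case True
      then have "K1 = K2" using L1(1) L2(1) \<open>v1 = v2\<close> by simp
      then show ?thesis by blast
    next
      case False
      obtain p1 q1 where P1: "p1 < q1" "q1 < length (piles a n ! i1)" "piles a n ! i1 ! p1 = u1" "piles a n ! i1 ! q1 = v1"
        using L1(8) unfolding placed_below_def by blast
      obtain p2 q2 where P2: "p2 < q2" "q2 < length (piles a n ! i2)" "piles a n ! i2 ! p2 = u2" "piles a n ! i2 ! q2 = v2"
        using L2(8) unfolding placed_below_def by blast
      have dist: "distinct (concat (piles a n))" using pinv_piles[of a n] unfolding pinv_def by blast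
      have "i1 = i2 \<and> q1 = q2"
        using distinct_concat_pos[OF dist L1(7) L2(7) P1(2) P2(2)] P1(4) P2(4) True by simp
      then have ii: "i1 = i2" "q1 = q2" by auto
      have "p1 \<noteq> p2" using P1(3) P2(3) ii False by auto
      then consider "p1 < p2" | "p2 < p1" by linarith
      then show ?thesis
      proof cases
        case 1
        have "p1 < p2 \<and> p2 < length (piles a n ! i1) \<and> piles a n ! i1 ! p1 = u1 \<and> piles a n ! i1 ! p2 = u2"
          using 1 P1 P2 ii by auto
        then have "placed_below a n i1 u1 u2" unfolding placed_below_def
          using L1(7) by blast
        then have "lhd a n K1 K2" unfolding lhd_def
          using L1(1,3,6,7,9) L2(1,3,9) \<open>v1 = v2\<close> False by blast
        then show ?thesis by blast
      next
        case 2
        have "p2 < p1 \<and> p1 < length (piles a n ! i1) \<and> piles a n ! i1 ! p2 = u2 \<and> piles a n ! i1 ! p1 = u1"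
          using 2 P1 P2 ii by auto
        then have "placed_below a n i1 u2 u1" unfolding placed_below_def
          using L1(7) by blast
        then have "lhd a n K2 K1" unfolding lhd_def
          using L1(1,3,6,7,9) L2(1,3,9) \<open>v1 = v2\<close> False by blast
        then show ?thesis by blast
      qed
    qed
  next
    case False
    have pr: "u1 < u2 \<and> a u1 < a u2 \<or> u2 < u1 \<and> a u2 < a u1"
    proof (cases "v1 < v2")
      case True
      have "u1 < u2 \<and> a u1 < a u2"
        by (rule pair_lemma[of J a K1 K2 u1 v1 u2 v2]) (use D1 D2 DJ L1 L2 True in auto)
      then show ?thesis ..
    next
      case f: False
      then have "v2 < v1" using False by simp
      have "u2 < u1 \<and> a u2 < a u1"
        by (rule pair_lemma[of J a K2 K1 u2 v2 u1 v1]) (use D1 D2 DJ L1 L2 \<open>v2 < v1\<close> in auto)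
      then show ?thesis ..
    qed
    then have "u1 \<noteq> u2" by auto
    define W where "W = insert u1 (insert u2 (J - {v1, v2}))"
    have sub: "W \<subseteq> K1 \<union> K2" using L1(1) L2(1) W_def by auto
    have cases_xy: "(x \<in> K1 \<and> y \<in> K1) \<or> (x \<in> K2 \<and> y \<in> K2) \<or> (x = u1 \<and> y = u2) \<or> (x = u2 \<and> y = u1)"
      if "x \<in> W" "y \<in> W" for x y
      using that L1(1) L2(1) W_def by auto
    have FW: "\<forall>x\<in>W. \<forall>y\<in>W. x < y \<longrightarrow> a x < a y"
    proof (intro ballI impI)
      fix x y assume xy: "x \<in> W" "y \<in> W" "x < y"
      from cases_xy[OF xy(1,2)] show "a x < a y"
        using D1 D2 pr xy(3) by auto
    qed
    have fJ: "finite J" using DJ by blast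
    have cJ: "card (J - {v1, v2}) = card J - 2" using fJ L1(2) L2(2) False
      by (simp add: card_Diff_subset)
    have c2: "card J \<ge> 2"
    proof -
      have "{v1, v2} \<subseteq> J" using L1(2) L2(2) by auto
      then have "card {v1, v2} \<le> card J" using fJ by (rule card_mono[rotated])
      then show ?thesis using False by simp
    qed
    have cW: "card W = card J" unfolding W_def using fJ cJ c2 L1(3) L2(3) \<open>u1 \<noteq> u2\<close> by simp
    have cK1: "card K1 = card J" using L1(1,2,3) fJ
      by (simp add: card_Diff_subset) (metis One_nat_def Suc_pred card_gt_0_iff empty_iff)
    have WM: "W \<in> maxfeas a n"
    proof -
      have "feasible a n W" unfolding feasible_def using sub D1 D2 FW by blast
      moreover have "\<forall>J'. feasible a n J' \<longrightarrow> card J' \<le> card W"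
        using L1(9) cW cK1 unfolding maxfeas_def by simp
      ultimately show ?thesis unfolding maxfeas_def by blast
    qed
    have "lhd a n W K1" unfolding lhd_def
    proof (intro conjI exI)
      show "W \<in> maxfeas a n" "K1 \<in> maxfeas a n" by fact+
      show "W - K1 = {u2}" using W_def L1(1,3) L2(3) \<open>u1 \<noteq> u2\<close> by auto
      show "K1 - W = {v2}" using W_def L1(1,3) L2(2,3) False by auto
      show "1 \<le> i2" "i2 < length (piles a n)" "placed_below a n i2 u2 v2" using L2 by auto
    qed
    moreover have "lhd a n W K2" unfolding lhd_def
    proof (intro conjI exI)
      show "W \<in> maxfeas a n" "K2 \<in> maxfeas a n" by fact+
      show "W - K2 = {u1}" using W_def L2(1,3) L1(3) \<open>u1 \<noteq> u2\<close> by auto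
      show "K2 - W = {v1}" using W_def L2(1,3) L1(2,3) False by auto
      show "1 \<le> i1" "i1 < length (piles a n)" "placed_below a n i1 u1 v1" using L1 by auto
    qed
    ultimately show ?thesis by blast
  qed
qed


lemma Mfam_iff: "K \<in> Mfam a n I \<longleftrightarrow> (lhd a n)\<^sup>*\<^sup>* K I"
proof
  assume "K \<in> Mfam a n I"
  then show "(lhd a n)\<^sup>*\<^sup>* K I"
    by induction (auto intro: converse_rtranclp_into_rtranclp)
next
  assume "(lhd a n)\<^sup>*\<^sup>* K I"
  then show "K \<in> Mfam a n I"
    by (induction rule: converse_rtranclp_induct) (auto intro: Mfam.intros)
qed

definition nf :: "(nat \<Rightarrow> nat) \<Rightarrow> nat \<Rightarrow> nat set \<Rightarrow> bool" where
  "nf a n K \<longleftrightarrow> \<not> (\<exists>J. lhd a n J K)"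

lemma exists_nf: "\<exists>K. (lhd a n)\<^sup>*\<^sup>* K J \<and> nf a n K"
proof (induction "sum id J" arbitrary: J rule: less_induct)
  case less
  show ?case
  proof (cases "nf a n J")
    case True then show ?thesis by blast
  next
    case False
    then obtain J' where "lhd a n J' J" unfolding nf_def by blast
    with less[of J'] lhd_sum obtain K where "(lhd a n)\<^sup>*\<^sup>* K J'" "nf a n K" by blast
    then show ?thesis using \<open>lhd a n J' J\<close> by (meson rtranclp.rtrancl_into_rtrancl)
  qed
qed

lemma unique_nf: "(lhd a n)\<^sup>*\<^sup>* K1 J \<Longrightarrow> (lhd a n)\<^sup>*\<^sup>* K2 J \<Longrightarrow> nf a n K1 \<Longrightarrow> nf a n K2 \<Longrightarrow> K1 = K2"
proof (induction "sum id J" arbitrary: J K1 K2 rule: less_induct)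
  case less
  from less.prems(1) show ?case
  proof (cases rule: rtranclp.cases)
    case rtrancl_refl
    note r1 = this
    from less.prems(2) show ?thesis
    proof (cases rule: rtranclp.cases)
      case rtrancl_refl then show ?thesis using r1 by simp
    next
      case (rtrancl_into_rtrancl y)
      then show ?thesis using less.prems(3) r1 unfolding nf_def by auto
    qed
  next
    case (rtrancl_into_rtrancl y1)
    note y1 = this
    from less.prems(2) show ?thesis
    proof (cases rule: rtranclp.cases)
      case rtrancl_refl then show ?thesis using less.prems(4) y1 unfolding nf_def by blast
    next
      case (rtrancl_into_rtrancl y2)
      note y2 = this
      obtain W where W: "(lhd a n)\<^sup>*\<^sup>* W y1" "(lhd a n)\<^sup>*\<^sup>* W y2" using lc[OF y1(2) y2(2)] by blast
      obtain M where M: "(lhd a n)\<^sup>*\<^sup>* M W" "nf a n M" using exists_nf by blast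
      have "K1 = M"
        using less.hyps[OF lhd_sum[OF y1(2)] y1(1) rtranclp_trans[OF M(1) W(1)] less.prems(3) M(2)] .
      moreover have "K2 = M"
        using less.hyps[OF lhd_sum[OF y2(2)] y2(1) rtranclp_trans[OF M(1) W(2)] less.prems(4) M(2)] .
      ultimately show ?thesis by simp
    qed
  qed
qed

lemma rtc_maxfeas: "(lhd a n)\<^sup>*\<^sup>* K I \<Longrightarrow> I \<in> maxfeas a n \<Longrightarrow> K \<in> maxfeas a n"
  by (induction rule: converse_rtranclp_induct) (auto simp: lhd_def)

lemma minimal_iff: "lhd_minimal a n K \<longleftrightarrow> K \<in> maxfeas a n \<and> nf a n K"
  unfolding lhd_minimal_def nf_def lhd_def by blast

lemma the_nf:
  assumes "(lhd a n)\<^sup>*\<^sup>* K0 I" "nf a n K0" "I \<in> maxfeas a n"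
  shows "(THE K. K \<in> Mfam a n I \<and> lhd_minimal a n K) = K0"
proof (rule the_equality)
  show "K0 \<in> Mfam a n I \<and> lhd_minimal a n K0"
    using assms rtc_maxfeas[OF assms(1,3)] by (simp add: Mfam_iff minimal_iff)
next
  fix K assume "K \<in> Mfam a n I \<and> lhd_minimal a n K"
  then show "K = K0" using unique_nf[OF _ assms(1) _ assms(2)] by (simp add: Mfam_iff minimal_iff)
qed

theorem corollary2:
  fixes a :: "nat \<Rightarrow> nat" and n :: nat and I J :: "nat set"
  assumes "inj_on a {1..n}" and "a ` {1..n} \<subseteq> {1..n}" and "a 0 = 0"
    and "I \<in> maxfeas a n" and "J \<in> maxfeas a n" and "lhd a n I J"
  shows "(THE K. K \<in> Mfam a n I \<and> lhd_minimal a n K) = (THE K. K \<in> Mfam a n J \<and> lhd_minimal a n K)"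
proof -
  obtain K0 where K0: "(lhd a n)\<^sup>*\<^sup>* K0 I" "nf a n K0" using exists_nf by blast
  have K0J: "(lhd a n)\<^sup>*\<^sup>* K0 J" using K0(1) assms(6) by (rule rtranclp.rtrancl_into_rtrancl)
  show ?thesis using the_nf[OF K0 assms(4)] the_nf[OF K0J K0(2) assms(5)] by simp
qed

end
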